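(* Let $G_1,\ldots,G_r$ be confusion graphs of $r$ users over a finite alphabet $\Sigma$, and let $x_1,\ldots,x_r\in[0,1]$ with $\sum_{i=1}^r x_i=1$. Then the rate vector $(x_1\log_2 c(G_1),\ldots,x_r\log_2 c(G_r))$ is feasible, where $c(G)$ denotes the Shannon capacity of $G$.
   Context: Setting: a sender broadcasts a word of length $n$ over a finite alphabet $\Sigma$ to $r$ users; user $i$ has a confusion graph $G_i$ on vertex set $\Sigma$, where $ab$ is an edge iff user $i$ cannot distinguish letters $a$ and $b$. Two words $x,y\in\Sigma^n$ are distinguishable by user $i$ if there is a coordinate $t$ with $x_t\neq y_t$ and $x_ty_t$ not an edge of $G_i$. A vector $(m_1,\ldots,m_r)$ of positive integers is feasible for length $n$ if there is a map $E:[m_1]\times\cdots\times[m_r]\to\Sigma^n$ such that for every $i$ and all tuples $a,a'$ with $a_i\neq a'_i$, $E(a)$ and $E(a')$ are distinguishable by user $i$. A rate vector $(R_1,\ldots,R_r)$ is feasible if there is a sequence of feasible vectors for lengths $n\to\infty$ with $R_i=\lim_{n\to\infty}\frac{\log_2 m_i^{(n)}}{n}$. The Shannon capacity of a graph $G$ is $c(G)=\lim_{n\to\infty}\alpha(G^n)^{1/n}$, where $G^n$ is the $n$-fold strong power of $G$ and $\alpha$ the independence number. *)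

theory Defs
  imports Complex_Main
begin

text \<open>A confusion graph on the alphabet 'a is given by a symmetric adjacency relation
  (edge ab iff the letters a and b cannot be distinguished).\<close>

definition confusion_graph :: "('a \<Rightarrow> 'a \<Rightarrow> bool) \<Rightarrow> bool" where
  "confusion_graph G \<longleftrightarrow> (\<forall>a b. G a b \<longrightarrow> G b a) \<and> (\<forall>a. \<not> G a a)"

definition distinguishable :: "('a \<Rightarrow> 'a \<Rightarrow> bool) \<Rightarrow> 'a list \<Rightarrow> 'a list \<Rightarrow> bool" where
  "distinguishable G x y \<longleftrightarrow>
     (\<exists>t < min (length x) (length y). x ! t \<noteq> y ! t \<and> \<not> G (x ! t) (y ! t))"

text \<open>Feasible vector (m_0,...,m_{r-1}) for length n: users indexed by i < r,
  message tuples are functions a with a i < m i for all i < r.\<close>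

definition feasible_vector ::
  "(nat \<Rightarrow> 'a \<Rightarrow> 'a \<Rightarrow> bool) \<Rightarrow> nat \<Rightarrow> nat \<Rightarrow> (nat \<Rightarrow> nat) \<Rightarrow> bool" where
  "feasible_vector G r n m \<longleftrightarrow>
     (\<forall>i<r. m i > 0) \<and>
     (\<exists>E :: (nat \<Rightarrow> nat) \<Rightarrow> 'a list.
        (\<forall>a. (\<forall>i<r. a i < m i) \<longrightarrow> length (E a) = n) \<and>
        (\<forall>i<r. \<forall>a a'. (\<forall>j<r. a j < m j) \<longrightarrow> (\<forall>j<r. a' j < m j) \<longrightarrow> a i \<noteq> a' i
             \<longrightarrow> distinguishable (G i) (E a) (E a')))"

definition feasible_rate ::
  "(nat \<Rightarrow> 'a \<Rightarrow> 'a \<Rightarrow> bool) \<Rightarrow> nat \<Rightarrow> (nat \<Rightarrow> real) \<Rightarrow> bool" where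
  "feasible_rate G r R \<longleftrightarrow>
     (\<exists>(ns :: nat \<Rightarrow> nat) (m :: nat \<Rightarrow> nat \<Rightarrow> nat).
        filterlim ns at_top sequentially \<and>
        (\<forall>k. feasible_vector G r (ns k) (m k)) \<and>
        (\<forall>i<r. (\<lambda>k. log 2 (real (m k i)) / real (ns k)) \<longlonglongrightarrow> R i))"

definition strong_power_adj :: "('a \<Rightarrow> 'a \<Rightarrow> bool) \<Rightarrow> nat \<Rightarrow> 'a list \<Rightarrow> 'a list \<Rightarrow> bool" where
  "strong_power_adj G n x y \<longleftrightarrow>
     x \<noteq> y \<and> (\<forall>t<n. x ! t = y ! t \<or> G (x ! t) (y ! t))"

definition independence_number_power :: "('a::finite \<Rightarrow> 'a \<Rightarrow> bool) \<Rightarrow> nat \<Rightarrow> nat" where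
  "independence_number_power G n =
     Max {card S | S. S \<subseteq> {x. length x = n} \<and>
            (\<forall>x\<in>S. \<forall>y\<in>S. \<not> strong_power_adj G n x y)}"

definition shannon_capacity :: "('a::finite \<Rightarrow> 'a \<Rightarrow> bool) \<Rightarrow> real" where
  "shannon_capacity G = lim (\<lambda>n. root n (real (independence_number_power G n)))"

end

theory Submission
  imports Defs
begin

abbreviation alpha where "alpha \<equiv> independence_number_power"

lemma alpha_set_finite:
  "finite {card S | S. S \<subseteq> {x::'a::finite list. length x = n} \<and>
            (\<forall>x\<in>S. \<forall>y\<in>S. \<not> strong_power_adj G n x y)}"
proof -
  have f: "finite {x::'a list. length x = n}"
    using finite_lists_length_eq[of "UNIV::'a set" n] by simp
  have "{card S | S. S \<subseteq> {x::'a::finite list. length x = n} \<and>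
            (\<forall>x\<in>S. \<forall>y\<in>S. \<not> strong_power_adj G n x y)} \<subseteq> card ` Pow {x::'a list. length x = n}"
    (is "?A \<subseteq> ?B")
  proof (rule subsetI)
    fix k assume "k \<in> ?A"
    then obtain S where kS: "k = card S" and S: "S \<subseteq> {x::'a::finite list. length x = n}" by blast
    have "S \<in> Pow {x. length x = n}" using S by (rule PowI)
    thus "k \<in> ?B" using kS by (rule rev_image_eqI)
  qed
  thus ?thesis using f by (rule finite_subset[OF _ finite_imageI[OF iffD2[OF finite_Pow_iff]]])
qed

lemma alpha_ge:
  fixes G :: "'a::finite \<Rightarrow> 'a \<Rightarrow> bool"
  assumes "S \<subseteq> {x. length x = n}" "\<forall>x\<in>S. \<forall>y\<in>S. \<not> strong_power_adj G n x y"
  shows "card S \<le> alpha G n"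
  unfolding independence_number_power_def
  by (rule Max_ge[OF alpha_set_finite]) (use assms in blast)

lemma alpha_attained:
  fixes G :: "'a::finite \<Rightarrow> 'a \<Rightarrow> bool"
  shows "\<exists>S. S \<subseteq> {x. length x = n} \<and> (\<forall>x\<in>S. \<forall>y\<in>S. \<not> strong_power_adj G n x y)
          \<and> card S = alpha G n"
proof -
  have "card {} \<in> {card S | S. S \<subseteq> {x::'a list. length x = n} \<and>
            (\<forall>x\<in>S. \<forall>y\<in>S. \<not> strong_power_adj G n x y)}" by (rule CollectI, rule exI[of _ "{}"], simp)
  then have ne: "{card S | S. S \<subseteq> {x::'a list. length x = n} \<and>
            (\<forall>x\<in>S. \<forall>y\<in>S. \<not> strong_power_adj G n x y)} \<noteq> {}" by blast
  have "alpha G n \<in> {card S | S. S \<subseteq> {x::'a list. length x = n} \<and>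
            (\<forall>x\<in>S. \<forall>y\<in>S. \<not> strong_power_adj G n x y)}"
   unfolding independence_number_power_def by (rule Max_in[OF alpha_set_finite ne])
  then show ?thesis by (auto simp only: mem_Collect_eq eq_commute)
qed

lemma alpha_enum:
  fixes G :: "'a::finite \<Rightarrow> 'a \<Rightarrow> bool"
  shows "\<exists>f. (\<forall>j<alpha G n. length (f j) = n) \<and>
     (\<forall>j<alpha G n. \<forall>j'<alpha G n. j \<noteq> j' \<longrightarrow> distinguishable G (f j) (f j'))"
proof -
  obtain S where S: "S \<subseteq> {x. length x = n}" "\<forall>x\<in>S. \<forall>y\<in>S. \<not> strong_power_adj G n x y"
    "card S = alpha G n" using alpha_attained[of n G] by metis
  have fS: "finite S"
    using finite_lists_length_eq[of "UNIV::'a set" n] S(1) finite_subset by fastforce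
  obtain h where h: "bij_betw h {0..<card S} S" using ex_bij_betw_nat_finite[OF fS] by blast
  have hS: "\<And>j. j < alpha G n \<Longrightarrow> h j \<in> S" using bij_betwE[OF h] S(3) by simp
  have hinj: "\<And>j j'. j < alpha G n \<Longrightarrow> j' < alpha G n \<Longrightarrow> j \<noteq> j' \<Longrightarrow> h j \<noteq> h j'"
  proof
    fix j j' assume a: "j < alpha G n" "j' < alpha G n" "j \<noteq> j'" "h j = h j'"
    have "j \<in> {0..<card S}" "j' \<in> {0..<card S}" using a S(3) by auto
    with inj_onD[OF bij_betw_imp_inj_on[OF h] a(4)] a(3) show False by blast
  qed
  show ?thesis
  proof (intro exI conjI allI impI)
    fix j assume "j < alpha G n" thus "length (h j) = n" using hS S(1) by auto
  next
    fix j j' assume j: "j < alpha G n" "j' < alpha G n" "j \<noteq> j'"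
    have ne: "h j \<noteq> h j'" using hinj j by blast
    have "\<not> strong_power_adj G n (h j) (h j')" using S(2) hS j by blast
    then obtain t where t: "t < n" "h j ! t \<noteq> h j' ! t" "\<not> G (h j ! t) (h j' ! t)"
      using ne unfolding strong_power_adj_def by blast
    have "length (h j) = n" "length (h j') = n" using hS S(1) j by auto
    thus "distinguishable G (h j) (h j')" unfolding distinguishable_def using t by auto
  qed
qed

lemma alpha_pos:
  fixes G :: "'a::finite \<Rightarrow> 'a \<Rightarrow> bool"
  shows "1 \<le> alpha G n"
proof -
  have "card {replicate n undefined :: 'a list} \<le> alpha G n"
    by (rule alpha_ge) (auto simp: strong_power_adj_def)
  thus ?thesis by simp
qed

lemma alpha_le:
  fixes G :: "'a::finite \<Rightarrow> 'a \<Rightarrow> bool"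
  shows "alpha G n \<le> card (UNIV::'a set) ^ n"
proof -
  obtain S where S: "S \<subseteq> {x. length x = n}" "card S = alpha G n"
    "\<forall>x\<in>S. \<forall>y\<in>S. \<not> strong_power_adj G n x y"
    using alpha_attained[of n G] by metis
  have f: "finite {x::'a list. length x = n}"
    using finite_lists_length_eq[of "UNIV::'a set" n] by simp
  have c: "card {x::'a list. length x = n} = card (UNIV::'a set) ^ n"
    using card_lists_length_eq[of "UNIV::'a set" n] by simp
  have "card S \<le> card {x::'a list. length x = n}" by (rule card_mono[OF f S(1)])
  then show ?thesis unfolding c S(2) .
qed

lemma distinguishable_neq: "distinguishable G x y \<Longrightarrow> x \<noteq> y"
  unfolding distinguishable_def by auto

lemma alpha_mult:
  fixes G :: "'a::finite \<Rightarrow> 'a \<Rightarrow> bool"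
  shows "alpha G m * alpha G n \<le> alpha G (m + n)"
proof -
  obtain f where f: "\<forall>j<alpha G m. length (f j) = m"
     "\<forall>j<alpha G m. \<forall>j'<alpha G m. j \<noteq> j' \<longrightarrow> distinguishable G (f j) (f j')"
    using alpha_enum[where G=G and n=m] by metis
  obtain g where g: "\<forall>j<alpha G n. length (g j) = n"
     "\<forall>j<alpha G n. \<forall>j'<alpha G n. j \<noteq> j' \<longrightarrow> distinguishable G (g j) (g j')"
    using alpha_enum[where G=G and n=n] by metis
  define A where "A = {..<alpha G m} \<times> {..<alpha G n}"
  define T where "T = (\<lambda>(j,j'). f j @ g j') ` A"
  have inj: "inj_on (\<lambda>(j,j'). f j @ g j') A"
  proof (rule inj_onI, clarify)
    fix j j' i i' assume a: "(j,j') \<in> A" "(i,i') \<in> A" and e: "f j @ g j' = f i @ g i'"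
    have ab: "j < alpha G m" "i < alpha G m" "j' < alpha G n" "i' < alpha G n"
      using a unfolding A_def by auto
    have "length (f j) = length (f i)" using f(1) ab by simp
    then have fe: "f j = f i" and ge: "g j' = g i'" using e by simp_all
    show "j = i \<and> j' = i'"
    proof
      show "j = i"
      proof (rule ccontr)
        assume "j \<noteq> i"
        then have "distinguishable G (f j) (f i)" using f(2) ab by simp
        thus False using fe distinguishable_neq by blast
      qed
      show "j' = i'"
      proof (rule ccontr)
        assume "j' \<noteq> i'"
        then have "distinguishable G (g j') (g i')" using g(2) ab by simp
        thus False using ge distinguishable_neq by blast
      qed
    qed
  qed
  have cT: "card T = alpha G m * alpha G n"
    unfolding T_def using card_image[OF inj] by (simp add: A_def card_cartesian_product)
  have "card T \<le> alpha G (m+n)"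
  proof (rule alpha_ge)
    show "T \<subseteq> {x. length x = m + n}" unfolding T_def A_def using f(1) g(1) by auto
    show "\<forall>x\<in>T. \<forall>y\<in>T. \<not> strong_power_adj G (m + n) x y"
    proof (intro ballI notI)
      fix x y assume x: "x \<in> T" and y: "y \<in> T" and adj: "strong_power_adj G (m + n) x y"
      obtain j j' where jj: "(j,j') \<in> A" "x = f j @ g j'" using x unfolding T_def by auto
      obtain i i' where ii: "(i,i') \<in> A" "y = f i @ g i'" using y unfolding T_def by auto
      have ab: "j < alpha G m" "i < alpha G m" "j' < alpha G n" "i' < alpha G n"
        using jj(1) ii(1) unfolding A_def by auto
      have lens: "length (f j) = m" "length (f i) = m" "length (g j') = n" "length (g i') = n"
        using ab f(1) g(1) by auto
      have adj1: "x \<noteq> y" and adj2: "\<And>t. t < m + n \<Longrightarrow> x ! t = y ! t \<or> G (x ! t) (y ! t)"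
        using adj unfolding strong_power_adj_def by auto
      have "j \<noteq> i \<or> j' \<noteq> i'" using adj1 jj ii by auto
      thus False
      proof
        assume "j \<noteq> i"
        then have "distinguishable G (f j) (f i)" using f(2) ab by simp
        then obtain t where t: "t < m" "f j ! t \<noteq> f i ! t" "\<not> G (f j ! t) (f i ! t)"
          unfolding distinguishable_def using lens by auto
        have "x ! t = f j ! t" "y ! t = f i ! t" using jj(2) ii(2) lens t(1) by (simp_all add: nth_append)
        moreover have "x ! t = y ! t \<or> G (x ! t) (y ! t)" using adj2 t(1) by simp
        ultimately show False using t by simp
      next
        assume "j' \<noteq> i'"
        then have "distinguishable G (g j') (g i')" using g(2) ab by simp
        then obtain t where t: "t < n" "g j' ! t \<noteq> g i' ! t" "\<not> G (g j' ! t) (g i' ! t)"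
          unfolding distinguishable_def using lens by auto
        have "x ! (m+t) = g j' ! t" "y ! (m+t) = g i' ! t" using jj(2) ii(2) lens by (simp_all add: nth_append)
        moreover have "x ! (m+t) = y ! (m+t) \<or> G (x ! (m+t)) (y ! (m+t))" using adj2 t(1) by simp
        ultimately show False using t by simp
      qed
    qed
  qed
  thus ?thesis using cT by simp
qed

lemma fekete:
  fixes b :: "nat \<Rightarrow> real"
  assumes sup: "\<And>m n. b m + b n \<le> b (m+n)" and nn: "\<And>n. 0 \<le> b n"
    and ub: "\<And>n. b n \<le> C * real n"
  shows "(\<lambda>n. b n / real n) \<longlonglongrightarrow> (SUP n\<in>{1..}. b n / real n)"
proof -
  define L where "L = (SUP n\<in>{1..}. b n / real n)"
  have bnd: "\<And>n. n \<ge> 1 \<Longrightarrow> b n / real n \<le> C"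
    using ub by (simp add: divide_le_eq mult.commute)
  have bdd: "bdd_above ((\<lambda>n. b n / real n) ` {1..})"
    by (rule bdd_aboveI2[where M=C]) (use bnd in auto)
  have le: "\<And>n. n \<ge> 1 \<Longrightarrow> b n / real n \<le> L"
    unfolding L_def by (rule cSUP_upper[OF _ bdd]) auto
  have b0: "b 0 = 0" using sup[of 0 0] nn[of 0] by simp
  have mult: "\<And>q m. real q * b m \<le> b (q*m)"
  proof -
    fix q m show "real q * b m \<le> b (q*m)"
    proof (induction q)
      case 0 thus ?case using b0 by simp
    next
      case (Suc q)
      have "real (Suc q) * b m = b m + real q * b m" by (simp add: algebra_simps)
      also have "\<dots> \<le> b m + b (q*m)" using Suc by simp
      also have "\<dots> \<le> b (m + q*m)" by (rule sup)
      finally show ?case by simp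
    qed
  qed
  have C0: "0 \<le> C" using nn[of 1] ub[of 1] by simp
  show ?thesis unfolding L_def[symmetric]
  proof (rule LIMSEQ_I)
    fix e :: real assume e: "0 < e"
    have "L - e/2 < L" using e by simp
    then obtain m where m: "m \<in> {1..}" "L - e/2 < b m / real m"
      unfolding L_def using less_cSUP_iff[OF _ bdd] by (metis L_def empty_iff atLeast_iff order_refl)
    have m1: "m \<ge> 1" using m(1) by simp
    obtain N :: nat where N: "2 * C * real m / e < real N" using reals_Archimedean2 by blast
    have bm0: "0 \<le> b m / real m" using nn[of m] by simp
    have bmC: "b m / real m \<le> C" using bnd m1 .
    show "\<exists>no. \<forall>n\<ge>no. norm (b n / real n - L) < e"
    proof (intro exI allI impI)
      fix n assume n: "n \<ge> max N m"
      have n1: "n \<ge> 1" using n m1 by simp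
      have npos: "0 < real n" using n1 by simp
      define q where "q = n div m"
      define s where "s = n mod m"
      have ns: "n = q*m + s" unfolding q_def s_def by simp
      have sm: "s < m" unfolding s_def using m1 by simp
      have "b n \<ge> b (q*m) + b s" using sup[of "q*m" s] ns by simp
      then have bn1: "b n \<ge> real q * b m" using mult[of q m] nn[of s] by linarith
      have qm: "real q * real m \<ge> real n - real m" using ns sm
        by (metis (mono_tags) add_le_cancel_left diff_le_eq le_eq_less_or_eq of_nat_add of_nat_le_iff of_nat_mult)
      have "real q * b m = (real q * real m) * (b m / real m)" using m1 by simp
      also have "\<dots> \<ge> (real n - real m) * (b m / real m)"
        using qm bm0 by (rule mult_right_mono)
      finally have bn2: "b n \<ge> (real n - real m) * (b m / real m)" using bn1 by linarith
      have "(real n - real m) * (b m / real m) = real n * (b m / real m) - real m * (b m / real m)"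
        by (rule left_diff_distrib)
      also have "\<dots> \<ge> real n * (b m / real m) - real m * C"
        using mult_left_mono[OF bmC, of "real m"] by simp
      finally have bn3: "b n \<ge> real n * (b m / real m) - real m * C" using bn2 by linarith
      have "real N * e > 2 * C * real m" using N e by (simp add: divide_less_eq)
      moreover have "real n * e \<ge> real N * e" using n e by simp
      ultimately have ne: "real n * e > 2 * C * real m" by linarith
      have d1: "(real n * (b m / real m) - real m * C) / real n \<le> b n / real n"
        using divide_right_mono[OF bn3] npos by simp
      have d2: "(real n * (b m / real m) - real m * C) / real n = b m / real m - real m * C / real n"
        using npos by (simp add: diff_divide_distrib)
      have "b n / real n \<ge> b m / real m - real m * C / real n" using d1 d2 by simp
      moreover have "real m * C / real n < e / 2"
        using ne npos by (simp add: field_simps)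
      ultimately have low: "b n / real n > L - e" using m(2) by linarith
      have up: "b n / real n \<le> L" using le n1 .
      show "norm (b n / real n - L) < e" using low up by simp
    qed
  qed
qed

lemma alpha_limit:
  fixes G :: "'a::finite \<Rightarrow> 'a \<Rightarrow> bool"
  shows "\<exists>L. (\<lambda>n. ln (real (alpha G n)) / real n) \<longlonglongrightarrow> L \<and> shannon_capacity G = exp L"
proof -
  define b where "b = (\<lambda>n. ln (real (alpha G n)))"
  have apos: "\<And>n. 1 \<le> real (alpha G n)" using alpha_pos[of G] by simp
  have sup: "\<And>m n. b m + b n \<le> b (m+n)"
  proof -
    fix m n
    have "b m + b n = ln (real (alpha G m) * real (alpha G n))"
    proof -
      have p: "0 < real (alpha G m)" "0 < real (alpha G n)" using apos[of m] apos[of n] by linarith+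
      show ?thesis unfolding b_def by (rule ln_mult_pos[OF p, symmetric])
    qed
    also have "\<dots> \<le> b (m+n)" unfolding b_def
      using alpha_mult[of G m n] alpha_pos[of G m] alpha_pos[of G n] alpha_pos[of G "m+n"]
      by (subst ln_le_cancel_iff) (auto simp del: of_nat_mult simp: of_nat_mult[symmetric])
    finally show "b m + b n \<le> b (m+n)" .
  qed
  have nn: "\<And>n. 0 \<le> b n" unfolding b_def using apos by simp
  have ub: "\<And>n. b n \<le> ln (real (card (UNIV::'a set))) * real n"
  proof -
    fix n
    have c1: "1 \<le> real (card (UNIV::'a set))"
      using finite_UNIV_card_ge_0[where 'a='a] by simp
    have "real (alpha G n) \<le> real (card (UNIV::'a set)) ^ n"
      using alpha_le[of G n] by (metis of_nat_le_iff of_nat_power)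
    then have "b n \<le> ln (real (card (UNIV::'a set)) ^ n)" unfolding b_def
      using apos[of n] c1 by (subst ln_le_cancel_iff) auto
    also have "\<dots> = real n * ln (real (card (UNIV::'a set)))" by (rule ln_realpow)
    finally show "b n \<le> ln (real (card (UNIV::'a set))) * real n" by (simp add: mult.commute)
  qed
  define L where "L = (SUP n\<in>{1..}. b n / real n)"
  have lim: "(\<lambda>n. b n / real n) \<longlonglongrightarrow> L" unfolding L_def by (rule fekete[OF sup nn ub])
  have "(\<lambda>n. exp (b n / real n)) \<longlonglongrightarrow> exp L" by (rule tendsto_exp[OF lim])
  moreover have "\<forall>\<^sub>F n in sequentially. exp (b n / real n) = root n (real (alpha G n))"
  proof (rule eventually_sequentiallyI[of 1])
    fix n :: nat assume n: "1 \<le> n"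
    have "root n (real (alpha G n)) = real (alpha G n) powr (1 / real n)"
      using n apos by (intro root_powr_inverse) auto
    also have "\<dots> = exp (b n / real n)" unfolding b_def powr_def using alpha_pos[of G n]
      by (auto simp: field_simps)
    finally show "exp (b n / real n) = root n (real (alpha G n))" by simp
  qed
  ultimately have "(\<lambda>n. root n (real (alpha G n))) \<longlonglongrightarrow> exp L"
    by (rule Lim_transform_eventually)
  then have "shannon_capacity G = exp L" unfolding shannon_capacity_def by (rule limI)
  thus ?thesis using lim unfolding b_def by blast
qed

lemma rate_lim:
  fixes b :: "nat \<Rightarrow> real"
  assumes lim: "(\<lambda>n. b n / real n) \<longlonglongrightarrow> L" and b0: "b 0 = 0" and x: "0 \<le> x"
  shows "(\<lambda>k. b (nat \<lfloor>x * real k\<rfloor>) / real k) \<longlonglongrightarrow> x * L"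
proof (cases "x = 0")
  case True thus ?thesis using b0 by simp
next
  case False
  then have xp: "0 < x" using x by simp
  define l where "l = (\<lambda>k. nat \<lfloor>x * real k\<rfloor>)"
  have lge: "\<And>k. x * real k - 1 \<le> real (l k)"
  proof -
    fix k
    have "x * real k - 1 < of_int \<lfloor>x * real k\<rfloor>" by linarith
    moreover have "0 \<le> \<lfloor>x * real k\<rfloor>" using xp by simp
    ultimately show "x * real k - 1 \<le> real (l k)" unfolding l_def by simp
  qed
  have lle: "\<And>k. real (l k) \<le> x * real k"
  proof -
    fix k
    have "0 \<le> \<lfloor>x * real k\<rfloor>" using xp by simp
    thus "real (l k) \<le> x * real k" unfolding l_def by simp
  qed
  have ltop: "filterlim l at_top sequentially"
  proof (subst filterlim_at_top, intro allI)
    fix Z :: nat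
    obtain N :: nat where N: "(real Z + 1) / x < real N" using reals_Archimedean2 by blast
    show "\<forall>\<^sub>F k in sequentially. Z \<le> l k"
    proof (rule eventually_sequentiallyI[of N])
      fix k assume k: "N \<le> k"
      have "real Z + 1 < x * real N" using N xp by (simp add: divide_less_eq mult.commute)
      also have "\<dots> \<le> x * real k" using k xp by simp
      finally have "real Z < real (l k)" using lge[of k] by linarith
      thus "Z \<le> l k" by simp
    qed
  qed
  have h: "(\<lambda>k. b (l k) / real (l k)) \<longlonglongrightarrow> L"
    using filterlim_compose[OF lim ltop] .
  have r: "(\<lambda>k. real (l k) / real k) \<longlonglongrightarrow> x"
  proof (rule tendsto_sandwich[where f="\<lambda>k. x - 1 / real k" and h="\<lambda>k. x"])
    show "\<forall>\<^sub>F k in sequentially. x - 1 / real k \<le> real (l k) / real k"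
    proof (rule eventually_sequentiallyI[of 1])
      fix k :: nat assume "1 \<le> k"
      then have kp: "0 < real k" by simp
      have "x - 1 / real k = (x * real k - 1) / real k" using kp by (simp add: field_simps)
      also have "\<dots> \<le> real (l k) / real k" using lge[of k] kp by (simp add: divide_right_mono)
      finally show "x - 1 / real k \<le> real (l k) / real k" .
    qed
    show "\<forall>\<^sub>F k in sequentially. real (l k) / real k \<le> x"
    proof (rule eventually_sequentiallyI[of 1])
      fix k :: nat assume "1 \<le> k"
      then have kp: "0 < real k" by simp
      show "real (l k) / real k \<le> x" using lle[of k] kp by (simp add: divide_le_eq)
    qed
    show "(\<lambda>k. x - 1 / real k) \<longlonglongrightarrow> x"
      using tendsto_diff[OF tendsto_const[of x] lim_inverse_n'] by simp
    show "(\<lambda>k. x) \<longlonglongrightarrow> x" by simp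
  qed
  have "(\<lambda>k. (b (l k) / real (l k)) * (real (l k) / real k)) \<longlonglongrightarrow> L * x"
    by (rule tendsto_mult[OF h r])
  moreover have "\<And>k. (b (l k) / real (l k)) * (real (l k) / real k) = b (l k) / real k"
    using b0 by (case_tac "l k = 0") auto
  ultimately show ?thesis unfolding l_def by (simp add: mult.commute)
qed

lemma concat_split:
  assumes "i < r"
  shows "concat (map w [0..<r]) = concat (map w [0..<i]) @ w i @ concat (map w [Suc i..<r])"
proof -
  have "[0..<r] = [0..<i] @ [i..<r]" using upt_add_eq_append[of 0 i "r-i"] assms by simp
  also have "[i..<r] = i # [Suc i..<r]" using upt_conv_Cons assms by simp
  finally show ?thesis by simp
qed

lemma length_concat_upt:
  "(\<And>j. j < i \<Longrightarrow> length (w j) = L j) \<Longrightarrow> length (concat (map w [0..<i])) = (\<Sum>j<i. L j)"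
  by (induction i) auto

lemma dist_mid:
  assumes "distinguishable G u v" "length p = length p'"
  shows "distinguishable G (p @ u @ s) (p' @ v @ s')"
proof -
  obtain t where t: "t < min (length u) (length v)" "u ! t \<noteq> v ! t" "\<not> G (u ! t) (v ! t)"
    using assms(1) unfolding distinguishable_def by blast
  show ?thesis unfolding distinguishable_def
    by (rule exI[of _ "length p + t"]) (use t assms(2) in \<open>auto simp: nth_append\<close>)
qed

lemma alpha_zero:
  fixes G :: "'a::finite \<Rightarrow> 'a \<Rightarrow> bool"
  shows "alpha G 0 = 1"
  using alpha_le[of G 0] alpha_pos[of G 0] by simp

theorem corollary4:
  fixes G :: "nat \<Rightarrow> 'a::finite \<Rightarrow> 'a \<Rightarrow> bool"
    and r :: nat
    and x :: "nat \<Rightarrow> real"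
  assumes "\<forall>i<r. confusion_graph (G i)"
    and "\<forall>i<r. 0 \<le> x i \<and> x i \<le> 1"
    and "(\<Sum>i<r. x i) = 1"
  shows "feasible_rate G r (\<lambda>i. x i * log 2 (shannon_capacity (G i)))"
proof -
  have "\<forall>i. \<exists>L. (\<lambda>n. ln (real (alpha (G i) n)) / real n) \<longlonglongrightarrow> L \<and> shannon_capacity (G i) = exp L"
    using alpha_limit by blast
  from choice[OF this] obtain Ls where Ls:
    "\<And>i. (\<lambda>n. ln (real (alpha (G i) n)) / real n) \<longlonglongrightarrow> Ls i"
    "\<And>i. shannon_capacity (G i) = exp (Ls i)" by blast
  have "\<forall>p. \<exists>f. (\<forall>j<alpha (G (fst p)) (snd p). length (f j) = snd p) \<and>
     (\<forall>j<alpha (G (fst p)) (snd p). \<forall>j'<alpha (G (fst p)) (snd p). j \<noteq> j' \<longrightarrow>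
        distinguishable (G (fst p)) (f j) (f j'))"
    by (intro allI) (rule alpha_enum)
  from choice[OF this] obtain F where F:
    "\<And>i n j. j < alpha (G i) n \<Longrightarrow> length (F (i,n) j) = n"
    "\<And>i n j j'. j < alpha (G i) n \<Longrightarrow> j' < alpha (G i) n \<Longrightarrow> j \<noteq> j' \<Longrightarrow>
        distinguishable (G i) (F (i,n) j) (F (i,n) j')"
    by (metis fst_conv snd_conv)
  define l where "l = (\<lambda>k i. nat \<lfloor>x i * real k\<rfloor>)"
  define m where "m = (\<lambda>k i. alpha (G i) (l k i))"
  define W where "W = (\<lambda>k (a::nat \<Rightarrow> nat) i. F (i, l k i) (a i))"
  define E where "E = (\<lambda>k a. concat (map (W k a) [0..<r]) @ replicate (k - (\<Sum>i<r. l k i)) undefined)"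
  have sumle: "\<And>k. (\<Sum>i<r. l k i) \<le> k"
  proof -
    fix k
    have "real (\<Sum>i<r. l k i) = (\<Sum>i<r. real (l k i))" by simp
    also have "\<dots> \<le> (\<Sum>i<r. x i * real k)"
    proof (rule sum_mono)
      fix i assume "i \<in> {..<r}"
      then have "0 \<le> x i * real k" using assms(2) by simp
      then have "0 \<le> \<lfloor>x i * real k\<rfloor>" by simp
      then show "real (l k i) \<le> x i * real k" unfolding l_def by simp
    qed
    also have "\<dots> = real k" using assms(3) by (simp add: sum_distrib_right[symmetric])
    finally have "real (\<Sum>i<r. l k i) \<le> real k" .
    thus "(\<Sum>i<r. l k i) \<le> k" by (rule iffD1[OF of_nat_le_iff])
  qed
  have WL: "\<And>k a i. a i < m k i \<Longrightarrow> length (W k a i) = l k i"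
    unfolding W_def m_def using F(1) by simp
  have lenE: "\<And>k a. (\<forall>i<r. a i < m k i) \<Longrightarrow> length (E k a) = k"
  proof -
    fix k a assume a: "\<forall>i<r. a i < m k i"
    have "length (concat (map (W k a) [0..<r])) = (\<Sum>i<r. l k i)"
      by (rule length_concat_upt) (use a WL in auto)
    thus "length (E k a) = k" unfolding E_def using sumle[of k] by simp
  qed
  have fv: "\<And>k. feasible_vector G r k (m k)"
  proof -
    fix k
    show "feasible_vector G r k (m k)" unfolding feasible_vector_def
    proof (intro conjI exI[of _ "E k"])
      show "\<forall>i<r. 0 < m k i" unfolding m_def using alpha_pos by (metis One_nat_def Suc_le_eq)
      show "\<forall>a. (\<forall>i<r. a i < m k i) \<longrightarrow> length (E k a) = k" using lenE by blast
      show "\<forall>i<r. \<forall>a a'. (\<forall>j<r. a j < m k j) \<longrightarrow> (\<forall>j<r. a' j < m k j) \<longrightarrow> a i \<noteq> a' i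
             \<longrightarrow> distinguishable (G i) (E k a) (E k a')"
      proof (intro allI impI)
        fix i a a' assume i: "i < r" and a: "\<forall>j<r. a j < m k j" and a': "\<forall>j<r. a' j < m k j"
          and ne: "a i \<noteq> a' i"
        have d: "distinguishable (G i) (W k a i) (W k a' i)"
          unfolding W_def using F(2)[of "a i" i "l k i" "a' i"] a a' i ne unfolding m_def by simp
        have lp: "length (concat (map (W k a) [0..<i])) = length (concat (map (W k a') [0..<i]))"
        proof -
          have "length (concat (map (W k a) [0..<i])) = (\<Sum>j<i. l k j)"
            by (rule length_concat_upt) (use a WL i in auto)
          moreover have "length (concat (map (W k a') [0..<i])) = (\<Sum>j<i. l k j)"
            by (rule length_concat_upt) (use a' WL i in auto)
          ultimately show ?thesis by simp
        qed
        show "distinguishable (G i) (E k a) (E k a')"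
          unfolding E_def concat_split[OF i, of "W k a"] concat_split[OF i, of "W k a'"]
          using dist_mid[OF d lp] by simp
      qed
    qed
  qed
  have rate: "\<And>i. i < r \<Longrightarrow> (\<lambda>k. log 2 (real (m k i)) / real k) \<longlonglongrightarrow> x i * log 2 (shannon_capacity (G i))"
  proof -
    fix i assume i: "i < r"
    have b0: "ln (real (alpha (G i) 0)) = 0" using alpha_zero[of "G i"] by simp
    have "(\<lambda>k. ln (real (alpha (G i) (nat \<lfloor>x i * real k\<rfloor>))) / real k) \<longlonglongrightarrow> x i * Ls i"
      by (rule rate_lim[OF Ls(1) b0]) (use assms(2) i in simp)
    then have "(\<lambda>k. ln (real (alpha (G i) (nat \<lfloor>x i * real k\<rfloor>))) / real k / ln 2) \<longlonglongrightarrow> x i * Ls i / ln 2"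
      by (rule tendsto_divide) auto
    moreover have "\<And>k. log 2 (real (m k i)) / real k = ln (real (alpha (G i) (nat \<lfloor>x i * real k\<rfloor>))) / real k / ln 2"
      unfolding m_def l_def log_def by simp
    moreover have "x i * log 2 (shannon_capacity (G i)) = x i * Ls i / ln 2"
      unfolding Ls(2) log_def by simp
    ultimately show "(\<lambda>k. log 2 (real (m k i)) / real k) \<longlonglongrightarrow> x i * log 2 (shannon_capacity (G i))"
      by simp
  qed
  show ?thesis unfolding feasible_rate_def
    by (rule exI[of _ "\<lambda>k. k"], rule exI[of _ m]) (use fv rate filterlim_ident in auto)
qed

end
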